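(* Let $\rho$ be a probability distribution on $\mathcal S$ with $\min_i\rho_i>0$. Suppose $Y=(S,B,S')$ is random with $S\sim\rho$, $\mathbb P(S'=j\mid S=i)=P_{ij}$ and $B\mid(S=i,S'=j)\sim\nu_{ij}$ for all $i,j\in\mathcal S$. Then $\mathbb E[H(p,Y)]=h_\rho(p)$ for all $p\in\Delta_d^{\mathcal S}$ (expectation taken coordinatewise), $h_\rho$ is non-expansive in $\ell^\Theta_{\mathrm C,\infty}$, and $\mathrm{fix}(h_\rho)=\mathrm{fix}(\mathcal G)$. In particular, these conclusions hold with $\rho=\mu$.
   Context: Finite MDP with state set $\mathcal{S}=\{1,\dots,m\}$, finite action set, deterministic rewards in $[0,1]$, fixed policy inducing a transition matrix $P=(P_{ij})$ on $\mathcal S$ that is irreducible and aperiodic with stationary distribution $\mu$. $R_{ij}$ is the finite-valued random one-step reward conditioned on transition $i\to j$; gain $\bar r^\pi=\sum_i\mu_i\sum_jP_{ij}\mathbb E[R_{ij}]$; $\nu_{ij}:=\mathrm{Law}(R_{ij}-\bar r^\pi)$. $\Theta=\{\theta_1<\dots<\theta_d\}$ with constant stride $\Delta>0$; $\Delta_d$ the probability simplex of $\mathbb R^d$; $\Delta_d^{\mathcal S}$ families $(p_i)_{i\in\mathcal S}$ with $p_i\in\Delta_d$. For $u\in\Delta_d$, $\eta^{u,0}:=\sum_ku_k\delta_{\theta_k}$. Categorical projection $\Pi^\Theta_{\mathrm C}$: $\delta_x\mapsto\delta_{\theta_1}$ if $x\le\theta_1$, $\delta_{\theta_d}$ if $x\ge\theta_d$,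 $\frac{\theta_{k+1}-x}{\Delta}\delta_{\theta_k}+\frac{x-\theta_k}{\Delta}\delta_{\theta_{k+1}}$ if $\theta_k\le x\le\theta_{k+1}$, extended linearly to probability laws. For $b\in\mathbb R$, $L_bu\in\Delta_d$ is defined by $\Pi^\Theta_{\mathrm C}(\text{law of }X+b,\ X\sim\eta^{u,0})=\eta^{L_bu,0}$. $\mathcal G(p)$ is the unique $q\in\Delta_d^{\mathcal S}$ with $\eta^{q_i,0}=\Pi^\Theta_{\mathrm C}\bigl(\sum_jP_{ij}(\nu_{ij}\ast\eta^{p_j,0})\bigr)$ for all $i$. One-sample backup: for $y=(s,b,s')\in\mathcal S\times[-1,1]\times\mathcal S$, $H(p,y)=q$ with $q_u=p_u$ ($u\ne s$), $q_s=L_bp_{s'}$. Mean-field map $h_\rho(p)_i:=(1-\rho_i)p_i+\rho_i\mathcal G(p)_i$, i.e. $h_\rho(p)=p+D_\rho(\mathcal G(p)-p)$ with $D_\rho=\mathrm{diag}(\rho)$. $\mathrm{fix}(F)$ is the fixed-point set of $F$. Coordinate Cramér metric: $F_u(\theta_k):=\sum_{j\le k}u_j$, $\ell^\Theta_{\mathrm C}(u,v)^2:=\Delta\sum_{k=1}^{d-1}(F_u(\theta_k)-F_v(\theta_k))^2$, $\ell^\Theta_{\mathrm C,\infty}(p,q):=\max_i\ell^\Theta_{\mathrm C}(p_i,q_i)$. *)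

theory Defs
  imports "HOL-Probability.Probability"
begin

(* Transition matrix P_{ij} = pmf (P i) j, i.e. P :: 's => 's pmf.
   Vectors u in Delta_d: functions nat => real, supported in {1..d}. *)

definition theta :: "real \<Rightarrow> real \<Rightarrow> nat \<Rightarrow> real" where
  "theta th1 Dl k = th1 + (real k - 1) * Dl"

definition cat_simplex :: "nat \<Rightarrow> (nat \<Rightarrow> real) set" where
  "cat_simplex d = {u. (\<forall>k\<in>{1..d}. 0 \<le> u k) \<and> (\<forall>k. k \<notin> {1..d} \<longrightarrow> u k = 0)
                   \<and> (\<Sum>k=1..d. u k) = 1}"

definition cat_simplex_fam :: "nat \<Rightarrow> ('s \<Rightarrow> nat \<Rightarrow> real) set" where
  "cat_simplex_fam d = {p. \<forall>i. p i \<in> cat_simplex d}"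

definition eta :: "real \<Rightarrow> real \<Rightarrow> nat \<Rightarrow> (nat \<Rightarrow> real) \<Rightarrow> real pmf" where
  "eta th1 Dl d u = embed_pmf (\<lambda>x. \<Sum>k\<in>{1..d}. if theta th1 Dl k = x then u k else 0)"

definition projpt :: "real \<Rightarrow> real \<Rightarrow> nat \<Rightarrow> real \<Rightarrow> nat \<Rightarrow> real" where
  "projpt th1 Dl d x k =
     (if k \<notin> {1..d} then 0
      else if x \<le> theta th1 Dl 1 then (if k = 1 then 1 else 0)
      else if x \<ge> theta th1 Dl d then (if k = d then 1 else 0)
      else if theta th1 Dl k \<le> x \<and> x \<le> theta th1 Dl (k+1) then (theta th1 Dl (k+1) - x) / Dl
      else if k \<ge> 2 \<and> theta th1 Dl (k-1) \<le> x \<and> x \<le> theta th1 Dl k then (x - theta th1 Dl (k-1)) / Dl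
      else 0)"

(* Categorical projection extended linearly to (finitely supported) laws;
   the result eta^{q,0} is represented by its weight vector q *)
definition projC :: "real \<Rightarrow> real \<Rightarrow> nat \<Rightarrow> real pmf \<Rightarrow> nat \<Rightarrow> real" where
  "projC th1 Dl d nu k = measure_pmf.expectation nu (\<lambda>x. projpt th1 Dl d x k)"

definition Lshift :: "real \<Rightarrow> real \<Rightarrow> nat \<Rightarrow> real \<Rightarrow> (nat \<Rightarrow> real) \<Rightarrow> nat \<Rightarrow> real" where
  "Lshift th1 Dl d b u = projC th1 Dl d (map_pmf (\<lambda>x. x + b) (eta th1 Dl d u))"

definition conv_pmf :: "real pmf \<Rightarrow> real pmf \<Rightarrow> real pmf" where
  "conv_pmf nu eta' = map_pmf (\<lambda>(a, x). a + x) (pair_pmf nu eta')"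

definition gain :: "('s::finite) pmf \<Rightarrow> ('s \<Rightarrow> 's pmf) \<Rightarrow> ('s \<Rightarrow> 's \<Rightarrow> real pmf) \<Rightarrow> real" where
  "gain mu P R = (\<Sum>i\<in>UNIV. pmf mu i * (\<Sum>j\<in>UNIV. pmf (P i) j * measure_pmf.expectation (R i j) (\<lambda>r. r)))"

definition nuR :: "('s::finite) pmf \<Rightarrow> ('s \<Rightarrow> 's pmf) \<Rightarrow> ('s \<Rightarrow> 's \<Rightarrow> real pmf) \<Rightarrow> 's \<Rightarrow> 's \<Rightarrow> real pmf" where
  "nuR mu P R i j = map_pmf (\<lambda>r. r - gain mu P R) (R i j)"

definition Gop :: "real \<Rightarrow> real \<Rightarrow> nat \<Rightarrow> ('s::finite) pmf \<Rightarrow> ('s \<Rightarrow> 's pmf) \<Rightarrow> ('s \<Rightarrow> 's \<Rightarrow> real pmf)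
                   \<Rightarrow> ('s \<Rightarrow> nat \<Rightarrow> real) \<Rightarrow> 's \<Rightarrow> nat \<Rightarrow> real" where
  "Gop th1 Dl d mu P R p i = projC th1 Dl d
      (bind_pmf (P i) (\<lambda>j. conv_pmf (nuR mu P R i j) (eta th1 Dl d (p j))))"

definition Hbk :: "real \<Rightarrow> real \<Rightarrow> nat \<Rightarrow> ('s \<Rightarrow> nat \<Rightarrow> real) \<Rightarrow> 's \<times> real \<times> 's \<Rightarrow> 's \<Rightarrow> nat \<Rightarrow> real" where
  "Hbk th1 Dl d p y = (case y of (s, b, s') \<Rightarrow> p(s := Lshift th1 Dl d b (p s')))"

definition hrho :: "real \<Rightarrow> real \<Rightarrow> nat \<Rightarrow> ('s::finite) pmf \<Rightarrow> ('s \<Rightarrow> 's pmf) \<Rightarrow> ('s \<Rightarrow> 's \<Rightarrow> real pmf)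
                   \<Rightarrow> 's pmf \<Rightarrow> ('s \<Rightarrow> nat \<Rightarrow> real) \<Rightarrow> 's \<Rightarrow> nat \<Rightarrow> real" where
  "hrho th1 Dl d mu P R rho p i =
     (\<lambda>k. (1 - pmf rho i) * p i k + pmf rho i * Gop th1 Dl d mu P R p i k)"

definition fixset :: "nat \<Rightarrow> (('s \<Rightarrow> nat \<Rightarrow> real) \<Rightarrow> ('s \<Rightarrow> nat \<Rightarrow> real)) \<Rightarrow> ('s \<Rightarrow> nat \<Rightarrow> real) set" where
  "fixset d F = {p \<in> cat_simplex_fam d. F p = p}"

definition cdf :: "(nat \<Rightarrow> real) \<Rightarrow> nat \<Rightarrow> real" where
  "cdf u k = (\<Sum>j=1..k. u j)"

definition cramer :: "real \<Rightarrow> nat \<Rightarrow> (nat \<Rightarrow> real) \<Rightarrow> (nat \<Rightarrow> real) \<Rightarrow> real" where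
  "cramer Dl d u v = sqrt (Dl * (\<Sum>k=1..d-1. (cdf u k - cdf v k)^2))"

definition cramer_inf :: "real \<Rightarrow> nat \<Rightarrow> (('s::finite) \<Rightarrow> nat \<Rightarrow> real) \<Rightarrow> ('s \<Rightarrow> nat \<Rightarrow> real) \<Rightarrow> real" where
  "cramer_inf Dl d p q = Max (range (\<lambda>i. cramer Dl d (p i) (q i)))"

primrec Pn :: "('s \<Rightarrow> 's pmf) \<Rightarrow> nat \<Rightarrow> 's \<Rightarrow> 's pmf" where
  "Pn P 0 i = return_pmf i"
| "Pn P (Suc n) i = bind_pmf (Pn P n i) P"

definition irreducible_chain :: "('s \<Rightarrow> 's pmf) \<Rightarrow> bool" where
  "irreducible_chain P \<longleftrightarrow> (\<forall>i j. \<exists>n>0. pmf (Pn P n i) j > 0)"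

definition aperiodic_chain :: "('s \<Rightarrow> 's pmf) \<Rightarrow> bool" where
  "aperiodic_chain P \<longleftrightarrow> (\<forall>i. Gcd {n. n > 0 \<and> pmf (Pn P n i) i > 0} = 1)"

definition stationary :: "('s \<Rightarrow> 's pmf) \<Rightarrow> 's pmf \<Rightarrow> bool" where
  "stationary P mu \<longleftrightarrow> bind_pmf mu P = mu"

definition prop5_concl :: "real \<Rightarrow> real \<Rightarrow> nat \<Rightarrow> ('s::finite) pmf \<Rightarrow> ('s \<Rightarrow> 's pmf) \<Rightarrow> ('s \<Rightarrow> 's \<Rightarrow> real pmf)
                         \<Rightarrow> 's pmf \<Rightarrow> bool" where
  "prop5_concl th1 Dl d mu P R rho \<longleftrightarrow>
     (\<forall>Y :: ('s \<times> real \<times> 's) pmf.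
        (\<forall>i b j. pmf Y (i, b, j) = pmf rho i * pmf (P i) j * pmf (nuR mu P R i j) b) \<longrightarrow>
        (\<forall>p\<in>cat_simplex_fam d.
           (\<lambda>u k. measure_pmf.expectation Y (\<lambda>y. Hbk th1 Dl d p y u k))
             = hrho th1 Dl d mu P R rho p))
   \<and> (\<forall>p\<in>cat_simplex_fam d. \<forall>q\<in>cat_simplex_fam d.
        cramer_inf Dl d (hrho th1 Dl d mu P R rho p) (hrho th1 Dl d mu P R rho q)
          \<le> cramer_inf Dl d p q)
   \<and> fixset d (hrho th1 Dl d mu P R rho) = fixset d (Gop th1 Dl d mu P R)"

end

theory Submission
  imports Defs
begin


lemma theta_inj: "Dl > 0 \<Longrightarrow> theta th1 Dl k = theta th1 Dl j \<longleftrightarrow> k = j"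
  by (auto simp: theta_def)

lemma int_bind_fin:
  fixes f :: "'b \<Rightarrow> real"
  assumes "finite (set_pmf M)" "\<And>x. x \<in> set_pmf M \<Longrightarrow> finite (set_pmf (N x))"
  shows "measure_pmf.expectation (bind_pmf M N) f
       = measure_pmf.expectation M (\<lambda>x. measure_pmf.expectation (N x) f)"
proof -
  let ?A = "\<Union>x\<in>set_pmf M. set_pmf (N x)"
  have finA: "finite ?A" using assms by auto
  have "measure_pmf.expectation (bind_pmf M N) f = (\<Sum>a\<in>?A. f a * pmf (bind_pmf M N) a)"
    by (rule integral_measure_pmf_real[OF finA]) auto
  also have "\<dots> = (\<Sum>a\<in>?A. f a * (\<Sum>x\<in>set_pmf M. pmf (N x) a * pmf M x))"
    by (intro sum.cong refl arg_cong2[where f="(*)"], subst pmf_bind,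
        rule integral_measure_pmf_real[OF assms(1)]) (auto simp: set_pmf_iff)
  also have "\<dots> = (\<Sum>a\<in>?A. \<Sum>x\<in>set_pmf M. f a * pmf (N x) a * pmf M x)"
    by (simp add: sum_distrib_left mult.assoc)
  also have "\<dots> = (\<Sum>x\<in>set_pmf M. \<Sum>a\<in>?A. f a * pmf (N x) a * pmf M x)"
    by (rule sum.swap)
  also have "\<dots> = (\<Sum>x\<in>set_pmf M. (\<Sum>a\<in>?A. f a * pmf (N x) a) * pmf M x)"
    by (simp add: sum_distrib_right)
  also have "\<dots> = (\<Sum>x\<in>set_pmf M. measure_pmf.expectation (N x) f * pmf M x)"
    by (intro sum.cong refl arg_cong2[where f="(*)"] integral_measure_pmf_real[symmetric] finA)
       (auto simp: set_pmf_iff)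
  also have "\<dots> = measure_pmf.expectation M (\<lambda>x. measure_pmf.expectation (N x) f)"
    by (rule integral_measure_pmf_real[symmetric, OF assms(1)]) auto
  finally show ?thesis .
qed

lemma eta_pmf:
  assumes "Dl > 0" "u \<in> cat_simplex d"
  shows "pmf (eta th1 Dl d u) x = (\<Sum>k\<in>{1..d}. if theta th1 Dl k = x then u k else 0)"
  unfolding eta_def
proof (rule pmf_embed_pmf)
  show "\<And>x. 0 \<le> (\<Sum>k\<in>{1..d}. if theta th1 Dl k = x then u k else 0)"
    using assms(2) by (auto simp: cat_simplex_def intro!: sum_nonneg)
  have "(\<integral>\<^sup>+ x. ennreal (\<Sum>k\<in>{1..d}. if theta th1 Dl k = x then u k else 0) \<partial>count_space UNIV)
     = (\<Sum>x\<in>theta th1 Dl ` {1..d}. ennreal (\<Sum>k\<in>{1..d}. if theta th1 Dl k = x then u k else 0))"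
  proof (rule nn_integral_count_space')
    fix x assume "x \<notin> theta th1 Dl ` {1..d}"
    hence "(\<Sum>k\<in>{1..d}. if theta th1 Dl k = x then u k else 0) = 0"
      by (intro sum.neutral) auto
    thus "ennreal (\<Sum>k\<in>{1..d}. if theta th1 Dl k = x then u k else 0) = 0" by simp
  qed auto
  also have "\<dots> = ennreal (\<Sum>x\<in>theta th1 Dl ` {1..d}. (\<Sum>k\<in>{1..d}. if theta th1 Dl k = x then u k else 0))"
    using assms(2) by (intro sum_ennreal) (auto simp: cat_simplex_def intro!: sum_nonneg)
  also have "(\<Sum>x\<in>theta th1 Dl ` {1..d}. (\<Sum>k\<in>{1..d}. if theta th1 Dl k = x then u k else 0))
       = (\<Sum>k\<in>{1..d}. u k)"
    by (subst sum.swap) (simp add: sum.delta')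
  also have "(\<Sum>k\<in>{1..d}. u k) = 1" using assms(2) by (simp add: cat_simplex_def)
  finally show "(\<integral>\<^sup>+ x. ennreal (\<Sum>k\<in>{1..d}. if theta th1 Dl k = x then u k else 0) \<partial>count_space UNIV) = 1"
    by (simp only: ennreal_1)
qed

lemma eta_pmf_theta:
  assumes "Dl > 0" "u \<in> cat_simplex d" "j \<in> {1..d}"
  shows "pmf (eta th1 Dl d u) (theta th1 Dl j) = u j"
proof -
  have "pmf (eta th1 Dl d u) (theta th1 Dl j) = (\<Sum>k\<in>{1..d}. if k = j then u k else 0)"
    unfolding eta_pmf[OF assms(1,2)] using theta_inj[OF assms(1)] by (intro sum.cong) auto
  also have "\<dots> = u j" using assms(3) by (simp add: sum.delta')
  finally show ?thesis .
qed

lemma eta_set: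
  assumes "Dl > 0" "u \<in> cat_simplex d"
  shows "set_pmf (eta th1 Dl d u) \<subseteq> theta th1 Dl ` {1..d}"
proof
  fix x assume "x \<in> set_pmf (eta th1 Dl d u)"
  hence "pmf (eta th1 Dl d u) x \<noteq> 0" by (simp add: set_pmf_iff)
  hence "(\<Sum>k\<in>{1..d}. if theta th1 Dl k = x then u k else 0) \<noteq> 0" using eta_pmf[OF assms] by simp
  hence "\<exists>k\<in>{1..d}. theta th1 Dl k = x" by (rule contrapos_np) (auto intro!: sum.neutral)
  thus "x \<in> theta th1 Dl ` {1..d}" by auto
qed

lemma eta_integral:
  fixes f :: "real \<Rightarrow> real"
  assumes "Dl > 0" "u \<in> cat_simplex d"
  shows "measure_pmf.expectation (eta th1 Dl d u) f = (\<Sum>j=1..d. u j * f (theta th1 Dl j))"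
proof -
  have "measure_pmf.expectation (eta th1 Dl d u) f = (\<Sum>x\<in>theta th1 Dl ` {1..d}. f x * pmf (eta th1 Dl d u) x)"
    by (rule integral_measure_pmf_real) (use eta_set[OF assms] in auto)
  also have "\<dots> = (\<Sum>j=1..d. f (theta th1 Dl j) * pmf (eta th1 Dl d u) (theta th1 Dl j))"
  proof (rule sum.reindex_cong)
    show "inj_on (theta th1 Dl) {1..d}" using theta_inj[OF assms(1)] by (auto simp: inj_on_def)
  qed auto
  also have "\<dots> = (\<Sum>j=1..d. u j * f (theta th1 Dl j))"
    by (intro sum.cong refl) (simp add: eta_pmf_theta[OF assms])
  finally show ?thesis .
qed

lemma eta_fin: "Dl > 0 \<Longrightarrow> u \<in> cat_simplex d \<Longrightarrow> finite (set_pmf (eta th1 Dl d u))"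
  by (rule finite_subset[OF eta_set]) auto

lemma Lshift_eq:
  assumes "Dl > 0" "u \<in> cat_simplex d"
  shows "Lshift th1 Dl d b u k = (\<Sum>j=1..d. u j * projpt th1 Dl d (theta th1 Dl j + b) k)"
  unfolding Lshift_def projC_def integral_map_pmf by (rule eta_integral[OF assms])



definition clamp :: "real \<Rightarrow> real" where "clamp t = max 0 (min 1 t)"

lemma projpt_t:
  assumes "Dl > 0"
  shows "projpt th1 Dl d (th1 + t * Dl) k =
     (if k \<notin> {1..d} then 0
      else if t \<le> 0 then (if k = 1 then 1 else 0)
      else if t \<ge> real d - 1 then (if k = d then 1 else 0)
      else if real k - 1 \<le> t \<and> t \<le> real k then real k - t
      else if k \<ge> 2 \<and> real k - 2 \<le> t \<and> t \<le> real k - 1 then t - (real k - 2)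
      else 0)"
proof -
  have e1: "\<And>a. theta th1 Dl a \<le> th1 + t * Dl \<longleftrightarrow> real a - 1 \<le> t" using assms by (simp add: theta_def)
  have e2: "\<And>a. th1 + t * Dl \<le> theta th1 Dl a \<longleftrightarrow> t \<le> real a - 1" using assms by (simp add: theta_def)
  have e3: "\<And>a. (theta th1 Dl a - (th1 + t * Dl)) / Dl = real a - 1 - t" using assms by (simp add: theta_def field_simps)
  have e4: "\<And>a. (th1 + t * Dl - theta th1 Dl a) / Dl = t - (real a - 1)" using assms by (simp add: theta_def field_simps)
  show ?thesis unfolding projpt_def e1 e2 e3 e4
    by (auto simp: of_nat_diff algebra_simps)
qed

lemma proj_cdf:
  assumes "Dl > 0" "1 \<le> k" "k < d"
  shows "(\<Sum>l=1..k. projpt th1 Dl d (th1 + t * Dl) l) = clamp (real k - t)"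
  using assms(2,3)
proof (induction k)
  case 0 thus ?case by simp
next
  case (Suc k)
  show ?case
  proof (cases "k = 0")
    case True
    thus ?thesis using Suc.prems by (auto simp: projpt_t[OF assms(1)] clamp_def)
  next
    case False
    hence "(\<Sum>l=1..Suc k. projpt th1 Dl d (th1 + t * Dl) l) = clamp (real k - t) + projpt th1 Dl d (th1 + t * Dl) (Suc k)"
      using Suc by simp
    also have "\<dots> = clamp (real (Suc k) - t)"
      using Suc.prems False by (auto simp: projpt_t[OF assms(1)] clamp_def)
    finally show ?thesis .
  qed
qed



lemma abel_sum:
  fixes D f :: "nat \<Rightarrow> real"
  assumes "D 0 = 0" "n \<ge> 1"
  shows "(\<Sum>j=1..n. (D j - D (j - 1)) * f j) = (\<Sum>j=1..n-1. D j * (f j - f (j+1))) + D n * f n"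
  using assms(2)
proof (induction n)
  case 0 thus ?case by simp
next
  case (Suc n)
  show ?case
  proof (cases "n = 0")
    case True thus ?thesis using assms(1) by simp
  next
    case False
    hence "(\<Sum>j=1..Suc n. (D j - D (j - 1)) * f j) = (\<Sum>j=1..n-1. D j * (f j - f (j+1))) + D n * f n
            + (D (Suc n) - D n) * f (Suc n)"
      using Suc by simp
    also have "\<dots> = (\<Sum>j=1..n. D j * (f j - f (j+1))) + D (Suc n) * f (Suc n)"
    proof -
      from False obtain m where n: "n = Suc m" by (cases n) auto
      have "(\<Sum>j=1..n. D j * (f j - f (j+1))) = D n * (f n - f (n+1)) + (\<Sum>j=1..n-1. D j * (f j - f (j+1)))"
        unfolding n by simp
      thus ?thesis by (simp add: algebra_simps)
    qed
    finally show ?thesis by simp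
  qed
qed

lemma telescope:
  fixes f :: "nat \<Rightarrow> real"
  shows "(\<Sum>j=1..n. f j - f (j+1)) = f 1 - f (n+1)"
  by (induction n) auto

lemma telescope2:
  fixes f :: "nat \<Rightarrow> real"
  shows "(\<Sum>j=1..n. f j - f (j-1)) = f n - f 0"
  by (induction n) auto

lemma weighted_cs:
  fixes a D :: "'a \<Rightarrow> real"
  assumes "\<And>j. j \<in> J \<Longrightarrow> a j \<ge> 0"
  shows "(\<Sum>j\<in>J. a j * D j)^2 \<le> (\<Sum>j\<in>J. a j) * (\<Sum>j\<in>J. a j * (D j)^2)"
proof -
  have "(\<Sum>j\<in>J. a j * D j) = (\<Sum>j\<in>J. sqrt (a j) * (sqrt (a j) * D j))"
    using assms by (intro sum.cong refl) (simp add: mult.assoc[symmetric])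
  hence "(\<Sum>j\<in>J. a j * D j)^2 \<le> (\<Sum>j\<in>J. (sqrt (a j))^2) * (\<Sum>j\<in>J. (sqrt (a j) * D j)^2)"
    using Cauchy_Schwarz_ineq_sum by metis
  also have "\<dots> = (\<Sum>j\<in>J. a j) * (\<Sum>j\<in>J. a j * (D j)^2)"
    using assms by (simp add: power_mult_distrib)
  finally show ?thesis .
qed

lemma quad_bound:
  fixes a :: "nat \<Rightarrow> nat \<Rightarrow> real" and D :: "nat \<Rightarrow> real"
  assumes "finite K" "finite J"
    and "\<And>k j. k \<in> K \<Longrightarrow> j \<in> J \<Longrightarrow> a k j \<ge> 0"
    and "\<And>k. k \<in> K \<Longrightarrow> (\<Sum>j\<in>J. a k j) \<le> 1"
    and "\<And>j. j \<in> J \<Longrightarrow> (\<Sum>k\<in>K. a k j) \<le> 1"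
  shows "(\<Sum>k\<in>K. (\<Sum>j\<in>J. a k j * D j)^2) \<le> (\<Sum>j\<in>J. (D j)^2)"
proof -
  have "(\<Sum>k\<in>K. (\<Sum>j\<in>J. a k j * D j)^2) \<le> (\<Sum>k\<in>K. (\<Sum>j\<in>J. a k j * (D j)^2))"
  proof (rule sum_mono)
    fix k assume k: "k \<in> K"
    have "(\<Sum>j\<in>J. a k j * D j)^2 \<le> (\<Sum>j\<in>J. a k j) * (\<Sum>j\<in>J. a k j * (D j)^2)"
      using assms(3)[OF k] by (rule weighted_cs)
    also have "\<dots> \<le> 1 * (\<Sum>j\<in>J. a k j * (D j)^2)"
      using assms(3)[OF k] assms(4)[OF k]
      by (intro mult_right_mono sum_nonneg mult_nonneg_nonneg) auto
    finally show "(\<Sum>j\<in>J. a k j * D j)^2 \<le> (\<Sum>j\<in>J. a k j * (D j)^2)" by simp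
  qed
  also have "\<dots> = (\<Sum>j\<in>J. (\<Sum>k\<in>K. a k j) * (D j)^2)"
    by (subst sum.swap) (simp add: sum_distrib_right)
  also have "\<dots> \<le> (\<Sum>j\<in>J. 1 * (D j)^2)"
    using assms(5) by (intro sum_mono mult_right_mono) auto
  finally show ?thesis by simp
qed

lemma clamp_mono: "s \<le> t \<Longrightarrow> clamp s \<le> clamp t"
  by (simp add: clamp_def)

lemma clamp_01: "0 \<le> clamp t" "clamp t \<le> 1"
  by (auto simp: clamp_def)



definition Scr :: "nat \<Rightarrow> (nat \<Rightarrow> real) \<Rightarrow> (nat \<Rightarrow> real) \<Rightarrow> real" where
  "Scr d u v = (\<Sum>k=1..d-1. (cdf u k - cdf v k)^2)"

lemma cdf_Lshift:
  assumes "Dl > 0" "u \<in> cat_simplex d" "1 \<le> k" "k < d"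
  shows "cdf (Lshift th1 Dl d b u) k = (\<Sum>j=1..d. u j * clamp (real k - real j + 1 - b / Dl))"
proof -
  have "cdf (Lshift th1 Dl d b u) k = (\<Sum>l=1..k. \<Sum>j=1..d. u j * projpt th1 Dl d (theta th1 Dl j + b) l)"
    unfolding cdf_def using Lshift_eq[OF assms(1,2)] by simp
  also have "\<dots> = (\<Sum>j=1..d. u j * (\<Sum>l=1..k. projpt th1 Dl d (theta th1 Dl j + b) l))"
    by (subst sum.swap) (simp add: sum_distrib_left)
  also have "\<dots> = (\<Sum>j=1..d. u j * clamp (real k - real j + 1 - b / Dl))"
  proof (intro sum.cong refl arg_cong2[where f="(*)"])
    fix j
    have "theta th1 Dl j + b = th1 + (real j - 1 + b / Dl) * Dl"
      using assms(1) by (simp add: theta_def field_simps)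
    hence "(\<Sum>l=1..k. projpt th1 Dl d (theta th1 Dl j + b) l) = clamp (real k - (real j - 1 + b / Dl))"
      using proj_cdf[OF assms(1,3,4)] by simp
    thus "(\<Sum>l=1..k. projpt th1 Dl d (theta th1 Dl j + b) l) = clamp (real k - real j + 1 - b / Dl)"
      by (simp add: algebra_simps)
  qed
  finally show ?thesis .
qed

lemma cdf_simplex_d: "u \<in> cat_simplex d \<Longrightarrow> cdf u d = 1"
  by (simp add: cdf_def cat_simplex_def)

lemma cdf_Suc: "cdf u (Suc j) = cdf u j + u (Suc j)"
  by (simp add: cdf_def)

lemma L_nonexp:
  assumes "Dl > 0" "u \<in> cat_simplex d" "v \<in> cat_simplex d" "d \<ge> 1"
  shows "Scr d (Lshift th1 Dl d b u) (Lshift th1 Dl d b v) \<le> Scr d u v"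
proof -
  define \<phi> where "\<phi> k j = clamp (real k - real j + 1 - b / Dl)" for k j :: nat
  define D where "D j = cdf u j - cdf v j" for j
  define a where "a k j = \<phi> k j - \<phi> k (j+1)" for k j
  have D0: "D 0 = 0" by (simp add: D_def cdf_def)
  have Dd: "D d = 0" using assms by (simp add: D_def cdf_simplex_d)
  have uv: "u j - v j = D j - D (j - 1)" if "j \<ge> 1" for j
    using that by (cases j) (auto simp: D_def cdf_Suc)
  have key: "cdf (Lshift th1 Dl d b u) k - cdf (Lshift th1 Dl d b v) k = (\<Sum>j=1..d-1. a k j * D j)"
    if k: "k \<in> {1..d-1}" for k
  proof -
    have "cdf (Lshift th1 Dl d b u) k - cdf (Lshift th1 Dl d b v) k = (\<Sum>j=1..d. (u j - v j) * \<phi> k j)"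
    proof -
      have k1: "1 \<le> k" and k2: "k < d" using k assms(4) by auto
      show ?thesis
        unfolding cdf_Lshift[OF assms(1,2) k1 k2] cdf_Lshift[OF assms(1,3) k1 k2] \<phi>_def
        by (simp only: sum_subtractf[symmetric] left_diff_distrib)
    qed
    also have "\<dots> = (\<Sum>j=1..d. (D j - D (j - 1)) * \<phi> k j)"
      using uv by (intro sum.cong refl) auto
    also have "\<dots> = (\<Sum>j=1..d-1. D j * (\<phi> k j - \<phi> k (j+1))) + D d * \<phi> k d"
      by (rule abel_sum[where D=D, OF D0 assms(4)])
    also have "\<dots> = (\<Sum>j=1..d-1. a k j * D j)"
      by (simp add: Dd a_def mult.commute)
    finally show ?thesis .
  qed
  have "Scr d (Lshift th1 Dl d b u) (Lshift th1 Dl d b v) = (\<Sum>k=1..d-1. (\<Sum>j=1..d-1. a k j * D j)^2)"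
    unfolding Scr_def using key by (intro sum.cong refl) auto
  also have "\<dots> \<le> (\<Sum>j=1..d-1. (D j)^2)"
  proof (rule quad_bound)
    fix k j
    show "0 \<le> a k j" unfolding a_def \<phi>_def by (simp add: clamp_mono)
  next
    fix k
    have "(\<Sum>j=1..d-1. a k j) = \<phi> k 1 - \<phi> k (d - 1 + 1)"
      unfolding a_def by (rule telescope)
    thus "(\<Sum>j=1..d-1. a k j) \<le> 1" using clamp_01[of "real k - real 1 + 1 - b / Dl"]
      clamp_01[of "real k - real (d-1+1) + 1 - b / Dl"] by (simp add: \<phi>_def)
  next
    fix j
    have "(\<Sum>k=1..d-1. a k j) = (\<Sum>k=1..d-1. \<phi> k j - \<phi> (k - 1) j)"
      unfolding a_def \<phi>_def by (intro sum.cong refl) (auto simp: of_nat_diff algebra_simps)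
    also have "\<dots> = \<phi> (d-1) j - \<phi> 0 j" by (rule telescope2)
    finally show "(\<Sum>k=1..d-1. a k j) \<le> 1" using clamp_01[of "real (d-1) - real j + 1 - b / Dl"]
      clamp_01[of "real 0 - real j + 1 - b / Dl"] by (simp add: \<phi>_def)
  qed auto
  also have "\<dots> = Scr d u v" by (simp add: Scr_def D_def)
  finally show ?thesis .
qed



lemma int_return_pmf: "measure_pmf.expectation (return_pmf x) (f :: _ \<Rightarrow> real) = f x"
  by (subst integral_measure_pmf_real[where A="{x}"]) auto

lemma fin_set_pmf_finite: "finite (set_pmf (M :: ('s::finite) pmf))"
  by (rule finite_subset[OF subset_UNIV]) simp

lemma int_finite_type: "measure_pmf.expectation (M :: ('s::finite) pmf) (f :: _ \<Rightarrow> real) = (\<Sum>j\<in>UNIV. pmf M j * f j)"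
  by (subst integral_measure_pmf_real[where A=UNIV]) (auto simp: mult.commute)

lemma int_fin_sum:
  assumes "finite B" "set_pmf M \<subseteq> B"
  shows "measure_pmf.expectation M (f :: _ \<Rightarrow> real) = (\<Sum>b\<in>B. pmf M b * f b)"
  using assms by (subst integral_measure_pmf_real[where A=B]) (auto simp: mult.commute)

lemma Gop_sum:
  fixes P :: "('s::finite) \<Rightarrow> 's pmf"
  assumes Dl: "Dl > 0" and p: "p \<in> cat_simplex_fam d"
    and finB: "finite Bs" and sub: "\<And>i j. set_pmf (nuR mu P R i j) \<subseteq> Bs"
  shows "Gop th1 Dl d mu P R p i k =
     (\<Sum>j\<in>UNIV. pmf (P i) j * (\<Sum>b\<in>Bs. pmf (nuR mu P R i j) b * Lshift th1 Dl d b (p j) k))"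
proof -
  have pj: "p j \<in> cat_simplex d" for j using p by (simp add: cat_simplex_fam_def)
  have finnu: "finite (set_pmf (nuR mu P R i j))" for i j using finite_subset[OF sub finB] .
  have conv: "measure_pmf.expectation (conv_pmf (nuR mu P R i j) (eta th1 Dl d (p j))) (\<lambda>x. projpt th1 Dl d x k)
      = (\<Sum>b\<in>Bs. pmf (nuR mu P R i j) b * Lshift th1 Dl d b (p j) k)" for j
  proof -
    have "measure_pmf.expectation (conv_pmf (nuR mu P R i j) (eta th1 Dl d (p j))) (\<lambda>x. projpt th1 Dl d x k)
       = measure_pmf.expectation (pair_pmf (nuR mu P R i j) (eta th1 Dl d (p j))) (\<lambda>z. projpt th1 Dl d (fst z + snd z) k)"
      unfolding conv_pmf_def integral_map_pmf by (simp add: case_prod_unfold)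
    also have "\<dots> = measure_pmf.expectation (nuR mu P R i j)
        (\<lambda>a. measure_pmf.expectation (eta th1 Dl d (p j)) (\<lambda>x. projpt th1 Dl d (a + x) k))"
      unfolding pair_pmf_def
      by (subst int_bind_fin) (auto simp: finnu eta_fin[OF Dl pj] int_bind_fin int_return_pmf)
    also have "\<dots> = measure_pmf.expectation (nuR mu P R i j) (\<lambda>a. Lshift th1 Dl d a (p j) k)"
      unfolding Lshift_def projC_def integral_map_pmf by (simp add: add.commute)
    also have "\<dots> = (\<Sum>b\<in>Bs. pmf (nuR mu P R i j) b * Lshift th1 Dl d b (p j) k)"
      by (rule int_fin_sum[OF finB sub])
    finally show ?thesis .
  qed
  have "Gop th1 Dl d mu P R p i k = measure_pmf.expectation (P i)
      (\<lambda>j. measure_pmf.expectation (conv_pmf (nuR mu P R i j) (eta th1 Dl d (p j))) (\<lambda>x. projpt th1 Dl d x k))"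
    unfolding Gop_def projC_def
    by (rule int_bind_fin) (auto simp: fin_set_pmf_finite conv_pmf_def finnu eta_fin[OF Dl pj])
  also have "\<dots> = (\<Sum>j\<in>UNIV. pmf (P i) j * (\<Sum>b\<in>Bs. pmf (nuR mu P R i j) b * Lshift th1 Dl d b (p j) k))"
    by (simp add: int_finite_type conv)
  finally show ?thesis .
qed



lemma sum_if_delta:
  fixes r :: "('s::finite) \<Rightarrow> real"
  assumes "(\<Sum>i\<in>UNIV. r i) = 1"
  shows "(\<Sum>i\<in>UNIV. r i * (if u = i then X else Z)) = (1 - r u) * Z + r u * X"
proof -
  have "(\<Sum>i\<in>UNIV. r i * (if u = i then X else Z)) = (\<Sum>i\<in>UNIV. r i * Z + (if u = i then r i * (X - Z) else 0))"
    by (intro sum.cong refl) (auto simp: algebra_simps)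
  also have "\<dots> = Z + r u * (X - Z)"
    by (simp add: sum.distrib sum_distrib_right[symmetric] assms)
  finally show ?thesis by (simp add: algebra_simps)
qed

lemma expect_H:
  fixes P :: "('s::finite) \<Rightarrow> 's pmf"
  assumes Dl: "Dl > 0" and p: "p \<in> cat_simplex_fam d"
    and finB: "finite Bs" and sub: "\<And>i j. set_pmf (nuR mu P R i j) \<subseteq> Bs"
    and Y: "\<forall>i b j. pmf Y (i, b, j) = pmf rho i * pmf (P i) j * pmf (nuR mu P R i j) b"
  shows "(\<lambda>u k. measure_pmf.expectation Y (\<lambda>y. Hbk th1 Dl d p y u k)) = hrho th1 Dl d mu P R rho p"
proof (intro ext)
  fix u k
  have subY: "set_pmf Y \<subseteq> UNIV \<times> Bs \<times> UNIV"
  proof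
    fix y assume y: "y \<in> set_pmf Y"
    obtain i b j where yy: "y = (i, b, j)" by (cases y) auto
    have "pmf Y (i, b, j) \<noteq> 0" using y yy by (simp add: set_pmf_iff)
    hence "pmf (nuR mu P R i j) b \<noteq> 0" using Y by auto
    hence "b \<in> Bs" using sub[of i j] by (auto simp: set_pmf_iff)
    thus "y \<in> UNIV \<times> Bs \<times> UNIV" using yy by simp
  qed
  have sum1: "(\<Sum>i\<in>UNIV. pmf rho i) = 1" by (rule sum_pmf_eq_1) auto
  have sumnu: "(\<Sum>b\<in>Bs. pmf (nuR mu P R i j) b) = 1" for i j by (rule sum_pmf_eq_1[OF finB sub])
  have sumP: "(\<Sum>j\<in>UNIV. pmf (P i) j) = 1" for i by (rule sum_pmf_eq_1) auto
  have inner: "(\<Sum>b\<in>Bs. \<Sum>j\<in>UNIV. pmf Y (i, b, j) * Hbk th1 Dl d p (i, b, j) u k)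
      = pmf rho i * (if u = i then Gop th1 Dl d mu P R p u k else p u k)" for i
  proof (cases "u = i")
    case True
    have "(\<Sum>b\<in>Bs. \<Sum>j\<in>UNIV. pmf Y (i, b, j) * Hbk th1 Dl d p (i, b, j) u k)
        = (\<Sum>b\<in>Bs. \<Sum>j\<in>UNIV. pmf rho i * (pmf (P i) j * (pmf (nuR mu P R i j) b * Lshift th1 Dl d b (p j) k)))"
      using True Y by (simp add: Hbk_def mult_ac)
    also have "\<dots> = pmf rho i * (\<Sum>j\<in>UNIV. pmf (P i) j * (\<Sum>b\<in>Bs. pmf (nuR mu P R i j) b * Lshift th1 Dl d b (p j) k))"
      by (subst sum.swap) (simp add: sum_distrib_left)
    also have "\<dots> = pmf rho i * Gop th1 Dl d mu P R p u k"
      using Gop_sum[OF Dl p finB sub] True by simp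
    finally show ?thesis using True by simp
  next
    case False
    have "(\<Sum>b\<in>Bs. \<Sum>j\<in>UNIV. pmf Y (i, b, j) * Hbk th1 Dl d p (i, b, j) u k)
        = (\<Sum>j\<in>UNIV. \<Sum>b\<in>Bs. (pmf rho i * p u k) * (pmf (P i) j * pmf (nuR mu P R i j) b))"
      using False Y by (subst sum.swap) (simp add: Hbk_def mult_ac)
    also have "\<dots> = (pmf rho i * p u k) * (\<Sum>j\<in>UNIV. pmf (P i) j * (\<Sum>b\<in>Bs. pmf (nuR mu P R i j) b))"
      by (simp add: sum_distrib_left)
    also have "\<dots> = pmf rho i * p u k" by (simp add: sumnu sumP)
    finally show ?thesis using False by simp
  qed
  have "measure_pmf.expectation Y (\<lambda>y. Hbk th1 Dl d p y u k)
      = (\<Sum>y\<in>UNIV \<times> Bs \<times> UNIV. pmf Y y * Hbk th1 Dl d p y u k)"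
    by (rule int_fin_sum[OF _ subY]) (simp add: finB)
  also have "\<dots> = (\<Sum>i\<in>UNIV. \<Sum>b\<in>Bs. \<Sum>j\<in>UNIV. pmf Y (i, b, j) * Hbk th1 Dl d p (i, b, j) u k)"
    by (simp add: sum.cartesian_product')
  also have "\<dots> = (\<Sum>i\<in>UNIV. pmf rho i * (if u = i then Gop th1 Dl d mu P R p u k else p u k))"
    by (simp add: inner)
  also have "\<dots> = (1 - pmf rho u) * p u k + pmf rho u * Gop th1 Dl d mu P R p u k"
    by (rule sum_if_delta[OF sum1])
  also have "\<dots> = hrho th1 Dl d mu P R rho p u k" by (simp add: hrho_def)
  finally show "measure_pmf.expectation Y (\<lambda>y. Hbk th1 Dl d p y u k) = hrho th1 Dl d mu P R rho p u k" .
qed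



lemma Gop_prod:
  fixes P :: "('s::finite) \<Rightarrow> 's pmf"
  assumes Dl: "Dl > 0" and p: "p \<in> cat_simplex_fam d"
    and finB: "finite Bs" and sub: "\<And>i j. set_pmf (nuR mu P R i j) \<subseteq> Bs"
  shows "Gop th1 Dl d mu P R p i l =
     (\<Sum>z\<in>UNIV \<times> Bs. (pmf (P i) (fst z) * pmf (nuR mu P R i (fst z)) (snd z)) * Lshift th1 Dl d (snd z) (p (fst z)) l)"
  unfolding Gop_sum[OF Dl p finB sub] sum.cartesian_product'
  by (simp add: sum_distrib_left mult_ac)

lemma cdf_Gop:
  fixes P :: "('s::finite) \<Rightarrow> 's pmf"
  assumes Dl: "Dl > 0" and p: "p \<in> cat_simplex_fam d"
    and finB: "finite Bs" and sub: "\<And>i j. set_pmf (nuR mu P R i j) \<subseteq> Bs"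
  shows "cdf (Gop th1 Dl d mu P R p i) k =
     (\<Sum>z\<in>UNIV \<times> Bs. (pmf (P i) (fst z) * pmf (nuR mu P R i (fst z)) (snd z)) * cdf (Lshift th1 Dl d (snd z) (p (fst z))) k)"
  unfolding cdf_def Gop_prod[OF Dl p finB sub]
  by (subst sum.swap) (simp add: sum_distrib_left)

lemma sq_convex:
  fixes r x y :: real
  assumes "0 \<le> r" "r \<le> 1"
  shows "((1 - r) * x + r * y)^2 \<le> (1 - r) * x^2 + r * y^2"
proof -
  have "(1 - r) * x^2 + r * y^2 - ((1 - r) * x + r * y)^2 = r * (1 - r) * (x - y)^2"
    by (simp add: power2_eq_square algebra_simps)
  also have "\<dots> \<ge> 0" using assms by simp
  finally show ?thesis by simp
qed

lemma G_nonexp: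
  fixes P :: "('s::finite) \<Rightarrow> 's pmf"
  assumes Dl: "Dl > 0" and d: "d \<ge> 1" and p: "p \<in> cat_simplex_fam d" and q: "q \<in> cat_simplex_fam d"
    and finB: "finite Bs" and sub: "\<And>i j. set_pmf (nuR mu P R i j) \<subseteq> Bs"
    and T: "\<And>j. Scr d (p j) (q j) \<le> T"
  shows "Scr d (Gop th1 Dl d mu P R p i) (Gop th1 Dl d mu P R q i) \<le> T"
proof -
  define w where "w z = pmf (P i) (fst z) * pmf (nuR mu P R i (fst z)) (snd z)" for z :: "'s \<times> real"
  define E where "E z k = cdf (Lshift th1 Dl d (snd z) (p (fst z))) k - cdf (Lshift th1 Dl d (snd z) (q (fst z))) k" for z k
  have w0: "\<And>z. 0 \<le> w z" by (simp add: w_def)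
  have sumnu: "(\<Sum>b\<in>Bs. pmf (nuR mu P R i j) b) = 1" for j by (rule sum_pmf_eq_1[OF finB sub])
  have sumP: "(\<Sum>j\<in>UNIV. pmf (P i) j) = 1" by (rule sum_pmf_eq_1) auto
  have w1: "(\<Sum>z\<in>UNIV \<times> Bs. w z) = 1"
    unfolding w_def sum.cartesian_product' by (simp add: sum_distrib_left[symmetric] sumnu sumP)
  have pj: "p j \<in> cat_simplex d" "q j \<in> cat_simplex d" for j using p q by (auto simp: cat_simplex_fam_def)
  have "Scr d (Gop th1 Dl d mu P R p i) (Gop th1 Dl d mu P R q i) = (\<Sum>k=1..d-1. (\<Sum>z\<in>UNIV \<times> Bs. w z * E z k)^2)"
    unfolding Scr_def cdf_Gop[OF Dl p finB sub] cdf_Gop[OF Dl q finB sub] w_def E_def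
    by (simp add: sum_subtractf[symmetric] right_diff_distrib)
  also have "\<dots> \<le> (\<Sum>k=1..d-1. (\<Sum>z\<in>UNIV \<times> Bs. w z) * (\<Sum>z\<in>UNIV \<times> Bs. w z * (E z k)^2))"
    by (intro sum_mono weighted_cs w0)
  also have "\<dots> = (\<Sum>z\<in>UNIV \<times> Bs. w z * Scr d (Lshift th1 Dl d (snd z) (p (fst z))) (Lshift th1 Dl d (snd z) (q (fst z))))"
    unfolding w1 Scr_def E_def by (simp add: sum_distrib_left, rule sum.swap)
  also have "\<dots> \<le> (\<Sum>z\<in>UNIV \<times> Bs. w z * T)"
  proof (intro sum_mono mult_left_mono w0)
    fix z :: "'s \<times> real"
    show "Scr d (Lshift th1 Dl d (snd z) (p (fst z))) (Lshift th1 Dl d (snd z) (q (fst z))) \<le> T"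
      using L_nonexp[OF Dl pj d] T order_trans by blast
  qed
  also have "\<dots> = T" by (simp add: sum_distrib_right[symmetric] w1)
  finally show ?thesis .
qed

lemma h_nonexp:
  fixes P :: "('s::finite) \<Rightarrow> 's pmf"
  assumes Dl: "Dl > 0" and d: "d \<ge> 1" and p: "p \<in> cat_simplex_fam d" and q: "q \<in> cat_simplex_fam d"
    and finB: "finite Bs" and sub: "\<And>i j. set_pmf (nuR mu P R i j) \<subseteq> Bs"
    and T: "\<And>j. Scr d (p j) (q j) \<le> T"
  shows "Scr d (hrho th1 Dl d mu P R rho p i) (hrho th1 Dl d mu P R rho q i) \<le> T"
proof -
  define r where "r = pmf rho i"
  have r0: "0 \<le> r" "r \<le> 1" by (auto simp: r_def pmf_le_1)
  have cdfh: "cdf (hrho th1 Dl d mu P R rho p' i) k = (1 - r) * cdf (p' i) k + r * cdf (Gop th1 Dl d mu P R p' i) k" for p' k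
    by (simp add: hrho_def cdf_def r_def sum.distrib sum_distrib_left)
  have "Scr d (hrho th1 Dl d mu P R rho p i) (hrho th1 Dl d mu P R rho q i)
      = (\<Sum>k=1..d-1. ((1 - r) * (cdf (p i) k - cdf (q i) k) + r * (cdf (Gop th1 Dl d mu P R p i) k - cdf (Gop th1 Dl d mu P R q i) k))^2)"
    unfolding Scr_def cdfh by (simp add: algebra_simps)
  also have "\<dots> \<le> (\<Sum>k=1..d-1. (1 - r) * (cdf (p i) k - cdf (q i) k)^2 + r * (cdf (Gop th1 Dl d mu P R p i) k - cdf (Gop th1 Dl d mu P R q i) k)^2)"
    by (intro sum_mono sq_convex r0)
  also have "\<dots> = (1 - r) * Scr d (p i) (q i) + r * Scr d (Gop th1 Dl d mu P R p i) (Gop th1 Dl d mu P R q i)"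
    by (simp add: Scr_def sum.distrib sum_distrib_left)
  also have "\<dots> \<le> (1 - r) * T + r * T"
    using r0 T G_nonexp[OF Dl d p q finB sub T] by (intro add_mono mult_left_mono) auto
  also have "\<dots> = T" by (simp add: algebra_simps)
  finally show ?thesis .
qed



lemma cramer_Scr: "cramer Dl d u v = sqrt (Dl * Scr d u v)"
  by (simp add: cramer_def Scr_def)

lemma cramer_inf_nonexp:
  fixes P :: "('s::finite) \<Rightarrow> 's pmf"
  assumes Dl: "Dl > 0" and d: "d \<ge> 1" and p: "p \<in> cat_simplex_fam d" and q: "q \<in> cat_simplex_fam d"
    and finB: "finite Bs" and sub: "\<And>i j. set_pmf (nuR mu P R i j) \<subseteq> Bs"
  shows "cramer_inf Dl d (hrho th1 Dl d mu P R rho p) (hrho th1 Dl d mu P R rho q) \<le> cramer_inf Dl d p q"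
proof -
  define T where "T = Max (range (\<lambda>j. Scr d (p j) (q j)))"
  have Tge: "Scr d (p j) (q j) \<le> T" for j unfolding T_def by (rule Max_ge) auto
  have "T \<in> range (\<lambda>j. Scr d (p j) (q j))" unfolding T_def by (rule Max_in) auto
  then obtain j0 where j0: "T = Scr d (p j0) (q j0)" by auto
  have c0: "cramer Dl d (p j0) (q j0) \<le> cramer_inf Dl d p q"
    unfolding cramer_inf_def by (rule Max_ge) auto
  have "cramer Dl d (hrho th1 Dl d mu P R rho p i) (hrho th1 Dl d mu P R rho q i) \<le> cramer_inf Dl d p q" for i
  proof -
    have "cramer Dl d (hrho th1 Dl d mu P R rho p i) (hrho th1 Dl d mu P R rho q i)
        = sqrt (Dl * Scr d (hrho th1 Dl d mu P R rho p i) (hrho th1 Dl d mu P R rho q i))"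
      by (rule cramer_Scr)
    also have "\<dots> \<le> sqrt (Dl * T)"
      using h_nonexp[OF Dl d p q finB sub Tge] Dl by (intro real_sqrt_le_mono mult_left_mono) auto
    also have "\<dots> = cramer Dl d (p j0) (q j0)" by (simp add: cramer_Scr j0)
    finally show ?thesis using c0 by simp
  qed
  thus ?thesis unfolding cramer_inf_def[of _ _ "hrho th1 Dl d mu P R rho p"]
    by (intro Max.boundedI) auto
qed

lemma fixset_eq:
  assumes pos: "\<forall>i. pmf rho i > 0"
  shows "fixset d (hrho th1 Dl d mu P R rho) = fixset d (Gop th1 Dl d mu P R)"
proof -
  have "hrho th1 Dl d mu P R rho p = p \<longleftrightarrow> Gop th1 Dl d mu P R p = p" for p
  proof -
    have "hrho th1 Dl d mu P R rho p = p \<longleftrightarrow>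
        (\<forall>i k. (1 - pmf rho i) * p i k + pmf rho i * Gop th1 Dl d mu P R p i k = p i k)"
      by (simp add: fun_eq_iff hrho_def)
    also have "\<dots> \<longleftrightarrow> (\<forall>i k. pmf rho i * (Gop th1 Dl d mu P R p i k - p i k) = 0)"
      by (simp add: algebra_simps)
    also have "\<dots> \<longleftrightarrow> (\<forall>i k. Gop th1 Dl d mu P R p i k = p i k)"
      using pos by (auto simp: less_le)
    also have "\<dots> \<longleftrightarrow> Gop th1 Dl d mu P R p = p" by (simp add: fun_eq_iff)
    finally show ?thesis .
  qed
  thus ?thesis by (simp add: fixset_def)
qed

lemma stationary_Pn:
  assumes "stationary P mu"
  shows "bind_pmf mu (Pn P n) = mu"
proof (induction n)
  case 0 thus ?case by (simp add: bind_return_pmf')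
next
  case (Suc n)
  have e: "Pn P (Suc n) = (\<lambda>x. bind_pmf (Pn P n x) P)" by (rule ext) simp
  have "bind_pmf mu (Pn P (Suc n)) = bind_pmf (bind_pmf mu (Pn P n)) P"
    unfolding e by (simp add: bind_assoc_pmf)
  also have "\<dots> = mu" using Suc assms by (simp add: stationary_def)
  finally show ?case .
qed

lemma mu_pos:
  fixes P :: "('s::finite) \<Rightarrow> 's pmf"
  assumes "stationary P mu" "irreducible_chain P"
  shows "pmf mu j > 0"
proof -
  obtain i0 where i0: "i0 \<in> set_pmf mu" using set_pmf_not_empty by fast
  hence mi0: "pmf mu i0 > 0" by (simp add: pmf_positive)
  obtain n where n: "pmf (Pn P n i0) j > 0" using assms(2) by (auto simp: irreducible_chain_def)
  have "pmf mu j = pmf (bind_pmf mu (Pn P n)) j" using stationary_Pn[OF assms(1)] by simp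
  also have "\<dots> = (\<Sum>i\<in>UNIV. pmf mu i * pmf (Pn P n i) j)"
    by (simp add: pmf_bind int_finite_type)
  also have "\<dots> \<ge> pmf mu i0 * pmf (Pn P n i0) j"
    by (rule member_le_sum) auto
  finally show ?thesis using mi0 n by (meson mult_pos_pos order_less_le_trans)
qed

lemma concl_all:
  fixes P :: "('s::finite) \<Rightarrow> 's pmf"
  assumes Dl: "Dl > 0" and d: "d \<ge> 1"
    and finR: "\<And>i j. finite (set_pmf (R i j))"
    and pos: "\<forall>i. pmf rho i > 0"
  shows "prop5_concl th1 Dl d mu P R rho"
proof -
  define Bs where "Bs = (\<Union>i. \<Union>j. set_pmf (nuR mu P R i j))"
  have finB: "finite Bs" unfolding Bs_def nuR_def using finR by auto
  have sub: "\<And>i j. set_pmf (nuR mu P R i j) \<subseteq> Bs" unfolding Bs_def by auto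
  show ?thesis unfolding prop5_concl_def
    using expect_H[OF Dl _ finB sub] cramer_inf_nonexp[OF Dl d _ _ finB sub] fixset_eq[OF pos]
    by blast
qed

theorem proposition5:
  fixes th1 Dl :: real and d :: nat
    and P :: "('s::finite) \<Rightarrow> 's pmf" and mu :: "'s pmf"
    and R :: "'s \<Rightarrow> 's \<Rightarrow> real pmf"
  assumes "Dl > 0" and "d \<ge> 1"
    and "irreducible_chain P" and "aperiodic_chain P" and "stationary P mu"
    and "\<And>i j. finite (set_pmf (R i j))"
    and "\<And>i j. set_pmf (R i j) \<subseteq> {0..1}"
  shows "(\<forall>rho :: 's pmf. (\<forall>i. pmf rho i > 0) \<longrightarrow> prop5_concl th1 Dl d mu P R rho)
         \<and> prop5_concl th1 Dl d mu P R mu"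
proof
  show "\<forall>rho :: 's pmf. (\<forall>i. pmf rho i > 0) \<longrightarrow> prop5_concl th1 Dl d mu P R rho"
  proof (intro allI impI)
    fix rho :: "'s pmf" assume "\<forall>i. pmf rho i > 0"
    thus "prop5_concl th1 Dl d mu P R rho" by (rule concl_all[where R=R, OF assms(1,2,6)])
  qed
  have "\<forall>i. pmf mu i > 0" using mu_pos[OF assms(5,3)] by blast
  thus "prop5_concl th1 Dl d mu P R mu" by (rule concl_all[where R=R, OF assms(1,2,6)])
qed

end
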